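(* Let $\mathbb{F}$ be a field of characteristic not $2$ and let $\Phi: M_n(\mathbb{F}) \to M_r(\mathbb{F})$ be an additive Jordan homomorphism. Then $\Phi$ preserves double zero products, i.e. $\Phi(A)\Phi(B) = \Phi(B)\Phi(A) = 0$ whenever $AB = BA = 0$. If $\mathbb{F} = \mathbb{R}$ or $\mathbb{C}$, then moreover $\Phi(A)\Phi(B) = 0$ whenever $AB = 0$ and $A,B$ are both self-adjoint, or both symmetric.
   Context: An additive map $\Phi$ is a Jordan homomorphism if $\Phi(AB+BA) = \Phi(A)\Phi(B)+\Phi(B)\Phi(A)$ for all $A,B$. Self-adjoint means $A^*=A$ (conjugate transpose), symmetric means $A^{\mathrm t}=A$. *)

theory Defs
  imports "HOL-Analysis.Analysis"
begin

definition additive_map :: "('a::semiring_1^'n^'n \<Rightarrow> 'a^'r^'r) \<Rightarrow> bool" where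
  "additive_map \<Phi> \<longleftrightarrow> (\<forall>A B. \<Phi> (A + B) = \<Phi> A + \<Phi> B)"

definition jordan_hom :: "('a::semiring_1^'n^'n \<Rightarrow> 'a^'r^'r) \<Rightarrow> bool" where
  "jordan_hom \<Phi> \<longleftrightarrow> additive_map \<Phi> \<and>
     (\<forall>A B. \<Phi> (A ** B + B ** A) = \<Phi> A ** \<Phi> B + \<Phi> B ** \<Phi> A)"

definition conj_transpose :: "complex^'n^'m \<Rightarrow> complex^'m^'n" where
  "conj_transpose A = (\<chi> i j. cnj (A $ j $ i))"

definition self_adjoint :: "complex^'n^'n \<Rightarrow> bool" where
  "self_adjoint A \<longleftrightarrow> conj_transpose A = A"

definition symmetric_mat :: "'a^'n^'n \<Rightarrow> bool" where
  "symmetric_mat A \<longleftrightarrow> transpose A = A"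

end

theory Submission
  imports Defs
begin


lemma mm_rdistrib: "((A::'a::semiring_1^'n^'m) + B) ** C = A ** C + B ** C"
  by (simp add: matrix_matrix_mult_def vec_eq_iff sum.distrib[symmetric] distrib_right)

lemma mm_neg_l: "(-(A::'a::ring_1^'n^'m)) ** B = - (A ** B)"
  by (simp add: matrix_matrix_mult_def vec_eq_iff sum_negf[symmetric])

lemma mm_neg_r: "(A::'a::ring_1^'n^'m) ** (-B) = - (A ** B)"
  by (simp add: matrix_matrix_mult_def vec_eq_iff sum_negf[symmetric])

lemma mm_diff_l: "((A::'a::ring_1^'n^'m) - B) ** C = A ** C - B ** C"
  by (simp add: matrix_matrix_mult_def vec_eq_iff sum_subtractf[symmetric] left_diff_distrib)

lemma mm_diff_r: "(A::'a::ring_1^'n^'m) ** (B - C) = A ** B - A ** C"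
  by (simp add: matrix_matrix_mult_def vec_eq_iff sum_subtractf[symmetric] right_diff_distrib)

lemma mm_sum_l: "(sum f S) ** (A::'a::semiring_1^'n^'m) = sum (\<lambda>x. f x ** A) S"
  by (induct S rule: infinite_finite_induct) (auto simp: mm_rdistrib)

lemma mm_sum_r: "(A::'a::semiring_1^'n^'m) ** (sum f S) = sum (\<lambda>x. A ** f x) S"
  by (induct S rule: infinite_finite_induct) (auto simp: matrix_add_ldistrib)

definition E :: "'n::finite \<Rightarrow> 'n \<Rightarrow> 'a::semiring_1 \<Rightarrow> 'a^'n^'n" where
  "E i j c = (\<chi> a b. if a = i \<and> b = j then c else 0)"

lemma E_mult_aux:
  fixes j k :: "'b::finite"
  shows "(\<Sum>m\<in>UNIV. (if a = i \<and> m = j then c else 0) * (if m = k \<and> b = l then d else (0::'a::semiring_1)))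
    = (if a = i then c else 0) * (if j = k \<and> b = l then d else 0)"
proof -
  have "(\<Sum>m\<in>UNIV. (if a = i \<and> m = j then c else 0) * (if m = k \<and> b = l then d else (0::'a)))
     = (\<Sum>m\<in>(UNIV::'b set). if m = j then (if a = i then c else 0) * (if j = k \<and> b = l then d else 0) else 0)"
    by (rule sum.cong) auto
  also have "\<dots> = (if a = i then c else 0) * (if j = k \<and> b = l then d else 0)" by simp
  finally show ?thesis .
qed

lemma E_mult_comp: "(E i j c ** E k l d) $ a $ b = (if a = i then c else 0) * (if j = k \<and> b = l then d else 0)"
  unfolding matrix_matrix_mult_def E_def by (simp only: vec_lambda_beta E_mult_aux)

lemma E_mult: "E i j c ** E k l d = (if j = k then E i l (c*d) else 0)"
  unfolding vec_eq_iff E_mult_comp by (auto simp: E_def)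

lemma E_add: "E i j (c+d) = E i j c + E i j d"
  by (auto simp: vec_eq_iff E_def)

lemma E_0[simp]: "E i j 0 = 0"
  by (auto simp: vec_eq_iff E_def)

lemma mat1_sum: "(mat 1 :: 'a::semiring_1^'n::finite^'n) = (\<Sum>i\<in>UNIV. E i i 1)"
proof -
  have "\<And>i ia. i \<noteq> ia \<Longrightarrow> (\<Sum>x\<in>UNIV. if i = x \<and> ia = x then (1::'a) else 0) = 0"
    by (rule sum.neutral) auto
  then show ?thesis
    by (auto simp: vec_eq_iff E_def mat_def sum_component if_distrib if_distribR sum.delta cong: if_cong)
qed

lemma E_comp: "E p q c $ a $ b = (if a = p \<and> b = q then c else 0)"
  by (simp add: E_def)

lemma mat_decomp: "(A :: 'a::semiring_1^'n::finite^'n) = (\<Sum>p\<in>UNIV. \<Sum>q\<in>UNIV. E p q (A$p$q))"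
proof -
  have i: "\<And>a b p. (\<Sum>q\<in>UNIV. if a = p \<and> b = q then A$p$q else 0) = (if a = p then A$p$b else 0)"
  proof -
    fix a b p
    show "(\<Sum>q\<in>UNIV. if a = p \<and> b = q then A$p$q else 0) = (if a = p then A$p$b else 0)"
      by (cases "a = p") simp_all
  qed
  show ?thesis
    unfolding vec_eq_iff sum_component E_comp i by simp
qed

lemma cancel2:
  assumes "(2::'a::field) \<noteq> 0" "(X::'a^'r^'r) + X = 0" shows "X = 0"
proof -
  have "\<And>i j. 2 * X$i$j = 0"
  proof -
    fix i j
    have "(X + X)$i$j = 0" using assms(2) by simp
    then show "2 * X$i$j = 0" by (simp only: vector_add_component mult_2)
  qed
  then show ?thesis using assms(1) by (simp add: vec_eq_iff)
qed

locale jh =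
  fixes \<phi> :: "'a::field^'n::finite^'n \<Rightarrow> 'a^'r::finite^'r"
  assumes two: "(2::'a) \<noteq> 0"
  and add: "\<phi> (A + B) = \<phi> A + \<phi> B"
  and jor: "\<phi> (A ** B + B ** A) = \<phi> A ** \<phi> B + \<phi> B ** \<phi> A"
begin

lemma zero[simp]: "\<phi> 0 = 0"
  using add[of 0 0] by simp

lemma neg: "\<phi> (-A) = - \<phi> A"
proof -
  have "\<phi> A + \<phi> (-A) = 0" using add[of A "-A"] by simp
  then show ?thesis by (metis minus_unique)
qed

lemma diff: "\<phi> (A - B) = \<phi> A - \<phi> B"
  using add[of A "-B"] neg[of B] by simp

lemma sum: "\<phi> (sum f S) = sum (\<lambda>x. \<phi> (f x)) S"
  by (induct S rule: infinite_finite_induct) (auto simp: add)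

lemma sq: "\<phi> (A ** A) = \<phi> A ** \<phi> A"
proof -
  have "\<phi> (A ** A) + \<phi> (A ** A) = \<phi> A ** \<phi> A + \<phi> A ** \<phi> A"
    using jor[of A A] add[of "A ** A" "A ** A"] by metis
  then have "(\<phi> (A ** A) - \<phi> A ** \<phi> A) + (\<phi> (A ** A) - \<phi> A ** \<phi> A) = 0"
    by (simp only: add_diff_add[symmetric] diff_self)
  from cancel2[OF two this] show ?thesis by (simp only: right_minus_eq)
qed

lemmas mm = matrix_add_ldistrib mm_rdistrib matrix_mul_assoc mm_neg_l mm_neg_r mm_diff_l mm_diff_r

lemma triple: "\<phi> (A ** B ** A) = \<phi> A ** \<phi> B ** \<phi> A"
proof -
  let ?C = "A ** B + B ** A"
  let ?a = "\<phi> A" and ?b = "\<phi> B"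
  have d: "A ** ?C + ?C ** A = (A ** B ** A + A ** B ** A) + ((A ** A) ** B + B ** (A ** A))"
    by (simp only: mm add_ac)
  have l0: "\<phi> (A ** ?C + ?C ** A) = ?a ** (?a ** ?b + ?b ** ?a) + (?a ** ?b + ?b ** ?a) ** ?a"
    by (simp only: jor)
  have l: "\<phi> (A ** ?C + ?C ** A) = (?a ** ?b ** ?a + ?a ** ?b ** ?a) + (?a ** ?a ** ?b + ?b ** ?a ** ?a)"
    unfolding l0 by (simp only: mm add_ac)
  have r0: "\<phi> ((A ** A) ** B + B ** (A ** A)) = (?a ** ?a) ** ?b + ?b ** (?a ** ?a)"
    by (simp only: jor sq)
  have r: "\<phi> ((A ** B ** A + A ** B ** A) + ((A ** A) ** B + B ** (A ** A))) =
      (\<phi> (A ** B ** A) + \<phi> (A ** B ** A)) + (?a ** ?a ** ?b + ?b ** ?a ** ?a)"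
    unfolding add[of "A ** B ** A + A ** B ** A"] add[of "A ** B ** A" "A ** B ** A"] r0
    by (simp only: matrix_mul_assoc)
  from d l r have "\<phi> (A ** B ** A) + \<phi> (A ** B ** A) = ?a ** ?b ** ?a + ?a ** ?b ** ?a"
    by (metis add_right_cancel)
  then have "(\<phi> (A ** B ** A) - ?a ** ?b ** ?a) + (\<phi> (A ** B ** A) - ?a ** ?b ** ?a) = 0"
    by (simp only: add_diff_add[symmetric] diff_self)
  from cancel2[OF two this] show ?thesis by (simp only: right_minus_eq)
qed

end


lemma E_sum: "E i j (sum f S) = sum (\<lambda>x. E i j (f x)) S"
  by (induct S rule: infinite_finite_induct) (auto simp: E_add)

context jh begin

lemma idem: "P ** P = P \<Longrightarrow> \<phi> P ** \<phi> P = \<phi> P"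
  using sq by metis

lemma orth:
  assumes "P ** P = P" "P ** X = 0" "X ** P = 0"
  shows "\<phi> P ** \<phi> X = 0" "\<phi> X ** \<phi> P = 0"
proof -
  have e: "\<phi> P ** \<phi> P = \<phi> P" using idem assms by simp
  have 1: "\<phi> P ** \<phi> X + \<phi> X ** \<phi> P = 0" using jor[of P X] assms by simp
  have 2: "\<phi> P ** \<phi> X ** \<phi> P = 0" using triple[of P X] assms by simp
  have "\<phi> P ** \<phi> X = \<phi> P ** (\<phi> P ** \<phi> X)" using e by (simp add: matrix_mul_assoc)
  also have "\<dots> = \<phi> P ** (- (\<phi> X ** \<phi> P))" using 1 by (metis add.commute add_eq_0_iff)
  also have "\<dots> = 0" using 2 by (simp add: mm)
  finally show a: "\<phi> P ** \<phi> X = 0" .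
  show "\<phi> X ** \<phi> P = 0" using 1 a by simp
qed

definition ee where "ee i = \<phi> (E i i 1)"
definition D where "D i c = \<phi> (E i i c)"
definition HH where "HH i j c = ee i ** \<phi> (E i j c) ** ee j"
definition GG where "GG i j c = ee j ** \<phi> (E i j c) ** ee i"
definition h0 where "h0 i j = HH i j 1"
definition g0 where "g0 i j = GG i j 1"

lemma ee_idem[simp]: "ee i ** ee i = ee i" "X ** ee i ** ee i = X ** ee i"
proof -
  show 1: "ee i ** ee i = ee i" unfolding ee_def by (rule idem) (simp add: E_mult)
  show "X ** ee i ** ee i = X ** ee i" by (metis 1 matrix_mul_assoc)
qed

lemma ee_orth[simp]: "i \<noteq> j \<Longrightarrow> ee i ** ee j = 0" "i \<noteq> j \<Longrightarrow> X ** ee i ** ee j = 0"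
proof -
  assume "i \<noteq> j"
  then show 1: "ee i ** ee j = 0" unfolding ee_def by (intro orth) (auto simp: E_mult)
  show "X ** ee i ** ee j = 0" by (metis 1 matrix_mul_assoc times0_right)
qed

lemma V1: "k \<noteq> p \<Longrightarrow> k \<noteq> q \<Longrightarrow> ee k ** \<phi> (E p q c) = 0"
      "k \<noteq> p \<Longrightarrow> k \<noteq> q \<Longrightarrow> \<phi> (E p q c) ** ee k = 0"
  unfolding ee_def by (intro orth; auto simp: E_mult)+

lemma V1'[simp]: "k \<noteq> p \<Longrightarrow> k \<noteq> q \<Longrightarrow> X ** ee k ** \<phi> (E p q c) = 0"
      "k \<noteq> p \<Longrightarrow> k \<noteq> q \<Longrightarrow> X ** \<phi> (E p q c) ** ee k = 0"
  using V1 by (metis matrix_mul_assoc times0_right)+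

lemma D_corner[simp]: "ee i ** D i c = D i c" "D i c ** ee i = D i c"
      "X ** ee i ** D i c = X ** D i c" "X ** D i c ** ee i = X ** D i c"
proof -
  have t: "ee i ** D i c ** ee i = D i c"
    using triple[of "E i i 1" "E i i c"] by (simp add: E_mult D_def ee_def)
  show 1: "ee i ** D i c = D i c" by (metis t ee_idem(1) matrix_mul_assoc)
  show 2: "D i c ** ee i = D i c" by (metis t ee_idem(2))
  show "X ** ee i ** D i c = X ** D i c" by (metis 1 matrix_mul_assoc)
  show "X ** D i c ** ee i = X ** D i c" by (metis 2 matrix_mul_assoc)
qed

lemma D_orth[simp]: "j \<noteq> i \<Longrightarrow> ee j ** D i c = 0" "j \<noteq> i \<Longrightarrow> D i c ** ee j = 0"
   "j \<noteq> i \<Longrightarrow> X ** ee j ** D i c = 0" "j \<noteq> i \<Longrightarrow> X ** D i c ** ee j = 0"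
  unfolding D_def using V1 V1' by auto

lemma D_add: "D i (a + b) = D i a + D i b"
  by (simp add: D_def E_add add)

lemma D_0[simp]: "D i 0 = 0" by (simp add: D_def)

lemma D_sum: "D i (sum f S) = sum (\<lambda>x. D i (f x)) S"
  by (simp add: D_def E_sum sum)

lemma PE1: "i \<noteq> j \<Longrightarrow> \<phi> (E i j c) = ee i ** \<phi> (E i j c) + \<phi> (E i j c) ** ee i"
  using jor[of "E i i 1" "E i j c"] by (simp add: E_mult ee_def)

lemma PE2: "i \<noteq> j \<Longrightarrow> \<phi> (E i j c) = ee j ** \<phi> (E i j c) + \<phi> (E i j c) ** ee j"
  using jor[of "E j j 1" "E i j c"] by (simp add: E_mult ee_def add.commute)

lemma PA: assumes "i \<noteq> j" shows "ee i ** \<phi> (E i j c) = HH i j c"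
proof -
  have "ee i ** \<phi> (E i j c) = ee i ** (ee j ** \<phi> (E i j c) + \<phi> (E i j c) ** ee j)"
    using PE2[OF assms] by metis
  then show ?thesis using assms by (simp add: mm HH_def)
qed

lemma PB: assumes "i \<noteq> j" shows "\<phi> (E i j c) ** ee j = HH i j c"
proof -
  have "\<phi> (E i j c) ** ee j = (ee i ** \<phi> (E i j c) + \<phi> (E i j c) ** ee i) ** ee j"
    using PE1[OF assms] by metis
  then show ?thesis using assms by (simp add: mm HH_def)
qed

lemma PC: assumes "i \<noteq> j" shows "ee j ** \<phi> (E i j c) = GG i j c"
proof -
  have "ee j ** \<phi> (E i j c) = ee j ** (ee i ** \<phi> (E i j c) + \<phi> (E i j c) ** ee i)"
    using PE1[OF assms] by metis
  then show ?thesis using assms by (simp add: mm GG_def)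
qed

lemma PD: assumes "i \<noteq> j" shows "\<phi> (E i j c) ** ee i = GG i j c"
proof -
  have "\<phi> (E i j c) ** ee i = (ee j ** \<phi> (E i j c) + \<phi> (E i j c) ** ee j) ** ee i"
    using PE2[OF assms] by metis
  then show ?thesis using assms by (simp add: mm GG_def)
qed

lemma PA'[simp]: "i \<noteq> j \<Longrightarrow> X ** ee i ** \<phi> (E i j c) = X ** HH i j c"
  "i \<noteq> j \<Longrightarrow> X ** \<phi> (E i j c) ** ee j = X ** HH i j c"
  "i \<noteq> j \<Longrightarrow> X ** ee j ** \<phi> (E i j c) = X ** GG i j c"
  "i \<noteq> j \<Longrightarrow> X ** \<phi> (E i j c) ** ee i = X ** GG i j c"
  using PA PB PC PD by (metis matrix_mul_assoc)+

lemma HH_corner[simp]: "i \<noteq> j \<Longrightarrow> ee i ** HH i j c = HH i j c" "i \<noteq> j \<Longrightarrow> HH i j c ** ee j = HH i j c"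
   "i \<noteq> j \<Longrightarrow> X ** ee i ** HH i j c = X ** HH i j c" "i \<noteq> j \<Longrightarrow> X ** HH i j c ** ee j = X ** HH i j c"
  unfolding HH_def by (simp_all add: mm del: PA')

lemma GG_corner[simp]: "i \<noteq> j \<Longrightarrow> ee j ** GG i j c = GG i j c" "i \<noteq> j \<Longrightarrow> GG i j c ** ee i = GG i j c"
   "i \<noteq> j \<Longrightarrow> X ** ee j ** GG i j c = X ** GG i j c" "i \<noteq> j \<Longrightarrow> X ** GG i j c ** ee i = X ** GG i j c"
  unfolding GG_def by (simp_all add: mm del: PA')

lemma HH_orth[simp]: "k \<noteq> i \<Longrightarrow> ee k ** HH i j c = 0" "k \<noteq> j \<Longrightarrow> HH i j c ** ee k = 0"
   "k \<noteq> i \<Longrightarrow> X ** ee k ** HH i j c = 0" "k \<noteq> j \<Longrightarrow> X ** HH i j c ** ee k = 0"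
  unfolding HH_def by (simp_all add: mm del: PA')

lemma GG_orth[simp]: "k \<noteq> j \<Longrightarrow> ee k ** GG i j c = 0" "k \<noteq> i \<Longrightarrow> GG i j c ** ee k = 0"
   "k \<noteq> j \<Longrightarrow> X ** ee k ** GG i j c = 0" "k \<noteq> i \<Longrightarrow> X ** GG i j c ** ee k = 0"
  unfolding GG_def by (simp_all add: mm del: PA')

lemmas P4 = PA PB PC PD

end

context jh begin

lemma CH1: assumes "i \<noteq> j" shows "HH i j c = D i c ** h0 i j"
proof -
  have eq: "\<phi> (E i j c) = D i c ** \<phi> (E i j 1) + \<phi> (E i j 1) ** D i c"
    using jor[of "E i i c" "E i j 1"] assms by (simp add: E_mult D_def)
  have "HH i j c = ee i ** (D i c ** \<phi> (E i j 1) + \<phi> (E i j 1) ** D i c) ** ee j"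
    unfolding HH_def eq ..
  also have "\<dots> = D i c ** h0 i j" using assms by (simp add: mm P4 h0_def)
  finally show ?thesis .
qed

lemma CH2: assumes "i \<noteq> j" shows "HH i j c = h0 i j ** D j c"
proof -
  have eq: "\<phi> (E i j c) = \<phi> (E i j 1) ** D j c + D j c ** \<phi> (E i j 1)"
    using jor[of "E i j 1" "E j j c"] assms by (simp add: E_mult D_def)
  have "HH i j c = ee i ** (\<phi> (E i j 1) ** D j c + D j c ** \<phi> (E i j 1)) ** ee j"
    unfolding HH_def eq ..
  also have "\<dots> = h0 i j ** D j c" using assms by (simp add: mm P4 h0_def)
  finally show ?thesis .
qed

lemma CG1: assumes "i \<noteq> j" shows "GG i j c = D j c ** g0 i j"
proof -
  have eq: "\<phi> (E i j c) = D j c ** \<phi> (E i j 1) + \<phi> (E i j 1) ** D j c"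
    using jor[of "E j j c" "E i j 1"] assms by (simp add: E_mult D_def add.commute)
  have "GG i j c = ee j ** (D j c ** \<phi> (E i j 1) + \<phi> (E i j 1) ** D j c) ** ee i"
    unfolding GG_def eq ..
  also have "\<dots> = D j c ** g0 i j" using assms by (simp add: mm P4 g0_def)
  finally show ?thesis .
qed

lemma CG2: assumes "i \<noteq> j" shows "GG i j c = g0 i j ** D i c"
proof -
  have eq: "\<phi> (E i j c) = D i c ** \<phi> (E i j 1) + \<phi> (E i j 1) ** D i c"
    using jor[of "E i i c" "E i j 1"] assms by (simp add: E_mult D_def)
  have "GG i j c = ee j ** (D i c ** \<phi> (E i j 1) + \<phi> (E i j 1) ** D i c) ** ee i"
    unfolding GG_def eq ..
  also have "\<dots> = g0 i j ** D i c" using assms by (simp add: mm P4 g0_def)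
  finally show ?thesis .
qed

lemma HHmul: assumes "i \<noteq> j" shows "HH i j (a*b) = HH i j a ** D j b"
proof -
  have eq: "\<phi> (E i j (a*b)) = \<phi> (E i j a) ** D j b + D j b ** \<phi> (E i j a)"
    using jor[of "E i j a" "E j j b"] assms by (simp add: E_mult D_def)
  have "HH i j (a*b) = ee i ** (\<phi> (E i j a) ** D j b + D j b ** \<phi> (E i j a)) ** ee j"
    unfolding HH_def eq ..
  also have "\<dots> = HH i j a ** D j b" using assms by (simp add: mm P4)
  finally show ?thesis .
qed

lemma GGmul: assumes "i \<noteq> j" shows "GG j i (a*b) = D i a ** GG j i b"
proof -
  have eq: "\<phi> (E j i (a*b)) = \<phi> (E j i b) ** D i a + D i a ** \<phi> (E j i b)"
    using jor[of "E j i b" "E i i a"] assms by (simp add: E_mult D_def mult.commute)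
  have "GG j i (a*b) = ee i ** (\<phi> (E j i b) ** D i a + D i a ** \<phi> (E j i b)) ** ee j"
    unfolding GG_def eq ..
  also have "\<dots> = D i a ** GG j i b" using assms by (simp add: mm P4)
  finally show ?thesis .
qed

lemma ee_dec: assumes "i \<noteq> j" shows "ee i = h0 i j ** h0 j i + g0 j i ** g0 i j"
proof -
  have eq: "ee i + ee j = \<phi> (E i j 1) ** \<phi> (E j i 1) + \<phi> (E j i 1) ** \<phi> (E i j 1)"
    using jor[of "E i j 1" "E j i 1"] assms by (simp add: E_mult ee_def add)
  have "ee i = ee i ** (ee i + ee j) ** ee i" using assms by (simp add: mm)
  also have "\<dots> = ee i ** (\<phi> (E i j 1) ** \<phi> (E j i 1) + \<phi> (E j i 1) ** \<phi> (E i j 1)) ** ee i"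
    unfolding eq ..
  also have "\<dots> = h0 i j ** h0 j i + g0 j i ** g0 i j" using assms by (simp add: mm P4 h0_def g0_def)
  finally show ?thesis .
qed

lemma R2a: assumes "i \<noteq> j" "j \<noteq> k" "i \<noteq> k" shows "h0 i j ** h0 j k = h0 i k"
proof -
  have eq: "\<phi> (E i k 1) = \<phi> (E i j 1) ** \<phi> (E j k 1) + \<phi> (E j k 1) ** \<phi> (E i j 1)"
    using jor[of "E i j 1" "E j k 1"] assms by (simp add: E_mult)
  have "h0 i k = ee i ** (\<phi> (E i j 1) ** \<phi> (E j k 1) + \<phi> (E j k 1) ** \<phi> (E i j 1)) ** ee k"
    unfolding h0_def HH_def eq ..
  also have "\<dots> = h0 i j ** h0 j k" using assms by (simp add: mm P4 h0_def V1)
  finally show ?thesis ..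
qed

lemma R3a: assumes "i \<noteq> j" "j \<noteq> k" "i \<noteq> k" shows "g0 j i ** g0 k j = g0 k i"
proof -
  have eq: "\<phi> (E k i 1) = \<phi> (E k j 1) ** \<phi> (E j i 1) + \<phi> (E j i 1) ** \<phi> (E k j 1)"
    using jor[of "E k j 1" "E j i 1"] assms by (simp add: E_mult)
  have "g0 k i = ee i ** (\<phi> (E k j 1) ** \<phi> (E j i 1) + \<phi> (E j i 1) ** \<phi> (E k j 1)) ** ee k"
    unfolding g0_def GG_def eq ..
  also have "\<dots> = g0 j i ** g0 k j" using assms by (simp add: mm P4 g0_def V1)
  finally show ?thesis ..
qed

lemma Rtri_h: assumes "i \<noteq> j" shows "h0 i j ** h0 j i ** h0 i j = h0 i j"
proof -
  have eq: "\<phi> (E i j 1) = \<phi> (E i j 1) ** \<phi> (E j i 1) ** \<phi> (E i j 1)"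
    using triple[of "E i j 1" "E j i 1"] by (simp add: E_mult)
  have "h0 i j ** h0 j i ** h0 i j = HH i j 1 ** (ee j ** \<phi> (E j i 1) ** ee i) ** HH i j 1"
    unfolding h0_def HH_def[of j i] ..
  also have "\<dots> = HH i j 1 ** \<phi> (E j i 1) ** HH i j 1" using assms by (simp add: mm del: PA')
  also have "\<dots> = ee i ** (\<phi> (E i j 1) ** \<phi> (E j i 1) ** \<phi> (E i j 1)) ** ee j"
    using assms by (simp add: mm P4)
  also have "\<dots> = h0 i j" unfolding eq[symmetric] h0_def HH_def ..
  finally show ?thesis .
qed

lemma Rtri_g: assumes "i \<noteq> j" shows "g0 i j ** g0 j i ** g0 i j = g0 i j"
proof -
  have eq: "\<phi> (E i j 1) = \<phi> (E i j 1) ** \<phi> (E j i 1) ** \<phi> (E i j 1)"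
    using triple[of "E i j 1" "E j i 1"] by (simp add: E_mult)
  have "g0 i j ** g0 j i ** g0 i j = GG i j 1 ** (ee i ** \<phi> (E j i 1) ** ee j) ** GG i j 1"
    unfolding g0_def GG_def[of j i] ..
  also have "\<dots> = GG i j 1 ** \<phi> (E j i 1) ** GG i j 1" using assms by (simp add: mm del: PA')
  also have "\<dots> = ee j ** (\<phi> (E i j 1) ** \<phi> (E j i 1) ** \<phi> (E i j 1)) ** ee i"
    using assms by (simp add: mm P4)
  also have "\<dots> = g0 i j" unfolding eq[symmetric] g0_def GG_def ..
  finally show ?thesis .
qed

lemma Mix12: assumes "i \<noteq> j" shows "h0 i j ** g0 i j = 0" "g0 i j ** h0 i j = 0"
proof -
  have 0: "\<phi> (E i j 1) ** \<phi> (E i j 1) = 0"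
    using sq[of "E i j 1"] assms by (simp add: E_mult)
  have "0 = ee i ** (\<phi> (E i j 1) ** \<phi> (E i j 1)) ** ee i" by (simp only: 0 times0_left times0_right)
  also have "\<dots> = h0 i j ** g0 i j" using assms by (simp add: mm P4 h0_def g0_def)
  finally show "h0 i j ** g0 i j = 0" ..
  have "0 = ee j ** (\<phi> (E i j 1) ** \<phi> (E i j 1)) ** ee j" by (simp only: 0 times0_left times0_right)
  also have "\<dots> = g0 i j ** h0 i j" using assms by (simp add: mm P4 h0_def g0_def)
  finally show "g0 i j ** h0 i j = 0" ..
qed

lemma Mix3: assumes "i \<noteq> j" "j \<noteq> k" "i \<noteq> k" shows "h0 i j ** g0 k j = 0"
proof -
  have eq: "0 = \<phi> (E i j 1) ** \<phi> (E k j 1) + \<phi> (E k j 1) ** \<phi> (E i j 1)"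
    using jor[of "E i j 1" "E k j 1"] assms by (simp add: E_mult)
  have "0 = ee i ** (\<phi> (E i j 1) ** \<phi> (E k j 1) + \<phi> (E k j 1) ** \<phi> (E i j 1)) ** ee k"
    unfolding eq[symmetric] by simp
  also have "\<dots> = h0 i j ** g0 k j" using assms by (simp add: mm P4 h0_def g0_def V1)
  finally show ?thesis ..
qed

lemma Mix4: assumes "i \<noteq> j" "j \<noteq> k" "i \<noteq> k" shows "g0 j i ** h0 j k = 0"
proof -
  have eq: "0 = \<phi> (E j i 1) ** \<phi> (E j k 1) + \<phi> (E j k 1) ** \<phi> (E j i 1)"
    using jor[of "E j i 1" "E j k 1"] assms by (simp add: E_mult)
  have "0 = ee i ** (\<phi> (E j i 1) ** \<phi> (E j k 1) + \<phi> (E j k 1) ** \<phi> (E j i 1)) ** ee k"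
    unfolding eq[symmetric] by simp
  also have "\<dots> = g0 j i ** h0 j k" using assms by (simp add: mm P4 h0_def g0_def V1)
  finally show ?thesis ..
qed

end


locale jh2 = jh \<phi> for \<phi> :: "'a::field^'n::finite^'n \<Rightarrow> 'a^'r::finite^'r" +
  assumes nt: "\<exists>a b::'n. a \<noteq> b"
begin

definition oth :: "'n \<Rightarrow> 'n" where "oth i = (SOME j. j \<noteq> i)"
definition f where "f i = h0 i (oth i) ** h0 (oth i) i"

lemma oth: "oth i \<noteq> i"
proof -
  obtain a b :: 'n where "a \<noteq> b" using nt by blast
  then have "\<exists>j. j \<noteq> i"
    by (cases "a = i") auto
  then show ?thesis unfolding oth_def by (rule someI_ex)
qed

lemma f_eq: assumes "j \<noteq> i" shows "f i = h0 i j ** h0 j i"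
proof (cases "j = oth i")
  case True then show ?thesis by (simp add: f_def)
next
  case False
  let ?k = "oth i"
  have k: "?k \<noteq> i" by (rule oth)
  have "h0 i j ** h0 j i = h0 i ?k ** h0 ?k j ** h0 j i"
    using R2a[of i ?k j] k False assms by simp
  also have "\<dots> = h0 i ?k ** (h0 ?k j ** h0 j i)" by (simp add: matrix_mul_assoc)
  also have "\<dots> = h0 i ?k ** h0 ?k i" using R2a[of ?k j i] k False assms by simp
  finally show ?thesis by (simp add: f_def)
qed

lemma f_idem: "f i ** f i = f i"
proof -
  let ?k = "oth i"
  have k: "?k \<noteq> i" by (rule oth)
  have "f i ** f i = (h0 i ?k ** h0 ?k i ** h0 i ?k) ** h0 ?k i"
    by (simp add: f_def matrix_mul_assoc)
  also have "\<dots> = f i" using Rtri_h[of i ?k] k by (simp add: f_def)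
  finally show ?thesis .
qed

lemma f_h: assumes "k \<noteq> i" shows "f i ** h0 i k = h0 i k"
  using f_eq[OF assms] Rtri_h[of i k] assms by simp

lemma h_f: assumes "k \<noteq> i" shows "h0 k i ** f i = h0 k i"
  using f_eq[OF assms] Rtri_h[of k i] assms by (simp add: matrix_mul_assoc)

lemma f_g: assumes "k \<noteq> i" shows "f i ** g0 k i = 0"
  using f_eq[OF assms] Mix12(1)[of k i] assms by (simp flip: matrix_mul_assoc)

lemma g_f: assumes "k \<noteq> i" shows "g0 i k ** f i = 0"
  using f_eq[OF assms] Mix12(2)[of i k] assms by (simp add: matrix_mul_assoc)

lemma ee_f: "ee i ** f i = f i" "f i ** ee i = f i"
proof -
  have k: "oth i \<noteq> i" by (rule oth)
  show "ee i ** f i = f i" using k by (simp add: f_def h0_def matrix_mul_assoc del: PA')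
  show "f i ** ee i = f i" using k by (simp add: f_def h0_def flip: matrix_mul_assoc del: PA')
qed

lemma hD: assumes "i \<noteq> j" shows "h0 i j ** D j c = D i c ** h0 i j"
  using CH1[OF assms] CH2[OF assms] by simp

lemma gD: assumes "i \<noteq> j" shows "g0 j i ** D j c = D i c ** g0 j i"
  using CG1[of j i c] CG2[of j i c] assms by simp

lemma f_D: "f i ** D i c = D i c ** f i"
proof -
  let ?k = "oth i"
  have k: "?k \<noteq> i" by (rule oth)
  have "f i ** D i c = h0 i ?k ** (h0 ?k i ** D i c)" by (simp add: f_def matrix_mul_assoc)
  also have "\<dots> = h0 i ?k ** D ?k c ** h0 ?k i" using hD[of ?k i c] k by (simp add: matrix_mul_assoc)
  also have "\<dots> = D i c ** h0 i ?k ** h0 ?k i" using hD[of i ?k c] k by simp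
  also have "\<dots> = D i c ** f i" by (simp add: f_def matrix_mul_assoc)
  finally show ?thesis .
qed

lemma UM: "D i (a*b) = D i a ** D i b"
proof -
  let ?k = "oth i"
  have k: "?k \<noteq> i" by (rule oth)
  have 1: "D i (a*b) ** h0 i ?k = D i a ** D i b ** h0 i ?k"
  proof -
    have "D i (a*b) ** h0 i ?k = HH i ?k (a*b)" using CH1 k by simp
    also have "\<dots> = HH i ?k a ** D ?k b" using HHmul k by simp
    also have "\<dots> = D i a ** (h0 i ?k ** D ?k b)" using CH1[of i ?k a] k by (simp add: matrix_mul_assoc)
    also have "\<dots> = D i a ** D i b ** h0 i ?k" using hD[of i ?k b] k by (simp add: matrix_mul_assoc)
    finally show ?thesis .
  qed
  have 2: "D i (a*b) ** g0 ?k i = D i a ** D i b ** g0 ?k i"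
  proof -
    have "D i (a*b) ** g0 ?k i = GG ?k i (a*b)" using CG1[of ?k i] k by simp
    also have "\<dots> = D i a ** GG ?k i b" using GGmul[of i ?k] k by simp
    also have "\<dots> = D i a ** D i b ** g0 ?k i" using CG1[of ?k i b] k by (simp add: matrix_mul_assoc)
    finally show ?thesis .
  qed
  have "D i (a*b) = D i (a*b) ** ee i" by simp
  also have "\<dots> = D i (a*b) ** h0 i ?k ** h0 ?k i + D i (a*b) ** g0 ?k i ** g0 i ?k"
    using ee_dec[of i ?k] k by (simp add: matrix_add_ldistrib matrix_mul_assoc)
  also have "\<dots> = D i a ** D i b ** (h0 i ?k ** h0 ?k i + g0 ?k i ** g0 i ?k)"
    unfolding 1 2 by (simp add: matrix_add_ldistrib matrix_mul_assoc)
  also have "\<dots> = D i a ** D i b"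
    unfolding ee_dec[of i ?k, OF not_sym[OF k], symmetric] by simp
  finally show ?thesis .
qed

end


lemma sum2_delta:
  fixes F :: "'n::finite \<Rightarrow> 'm::finite \<Rightarrow> 'b::comm_monoid_add"
  shows "(\<Sum>p\<in>UNIV. \<Sum>q\<in>UNIV. if p = a \<and> q = b then F p q else 0) = F a b"
proof -
  have "\<And>p. (\<Sum>q\<in>UNIV. if p = a \<and> q = b then F p q else 0) = (if p = a then F p b else 0)"
  proof -
    fix p show "(\<Sum>q\<in>UNIV. if p = a \<and> q = b then F p q else 0) = (if p = a then F p b else 0)"
      by (cases "p = a") simp_all
  qed
  then show ?thesis by simp
qed

context jh2 begin

definition h where "h i j = (if i = j then f i else h0 i j)"
definition g where "g i j = (if i = j then ee i - f i else g0 i j)"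

lemma h0_corner: "i \<noteq> j \<Longrightarrow> ee i ** h0 i j = h0 i j" "i \<noteq> j \<Longrightarrow> h0 i j ** ee j = h0 i j"
  by (simp_all add: h0_def)

lemma g0_corner: "i \<noteq> j \<Longrightarrow> ee j ** g0 i j = g0 i j" "i \<noteq> j \<Longrightarrow> g0 i j ** ee i = g0 i j"
  by (simp_all add: g0_def)

lemma UC_h: "h i j ** D j c = D i c ** h i j"
  by (cases "i = j") (simp_all add: h_def f_D hD)

lemma UC_g: "g j i ** D j c = D i c ** g j i"
proof (cases "i = j")
  case True
  then show ?thesis by (simp add: g_def mm_diff_l mm_diff_r f_D)
next
  case False
  then show ?thesis by (simp add: g_def gD)
qed

lemma UR1a: "h i j ** g k j = 0"
proof (cases "i = j")
  case True
  then show ?thesis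
  proof (cases "k = j")
    case True
    then show ?thesis using \<open>i = j\<close> by (simp add: h_def g_def mm_diff_r ee_f f_idem)
  next
    case False
    then show ?thesis using \<open>i = j\<close> by (simp add: h_def g_def f_g)
  qed
next
  case False
  then show ?thesis
  proof (cases "k = j")
    case True
    then show ?thesis using \<open>i \<noteq> j\<close> by (simp add: h_def g_def mm_diff_r h_f h0_corner)
  next
    case False
    then show ?thesis using \<open>i \<noteq> j\<close> Mix12(1)[of i j] Mix3[of i j k]
      by (cases "i = k") (simp_all add: h_def g_def)
  qed
qed

lemma UR1b: "g j i ** h j k = 0"
proof (cases "j = i")
  case True
  then show ?thesis
  proof (cases "k = j")
    case True
    then show ?thesis using \<open>j = i\<close> by (simp add: h_def g_def mm_diff_l ee_f f_idem)
  next
    case False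
    then show ?thesis using \<open>j = i\<close> by (simp add: h_def g_def mm_diff_l f_h h0_corner)
  qed
next
  case False
  then show ?thesis
  proof (cases "k = j")
    case True
    then show ?thesis using \<open>j \<noteq> i\<close> by (simp add: h_def g_def g_f)
  next
    case False
    then show ?thesis using \<open>j \<noteq> i\<close> Mix12(2)[of j i] Mix4[of i j k]
      by (cases "i = k") (simp_all add: h_def g_def)
  qed
qed

lemma UR2: "h i j ** h j k = h i k"
proof (cases "i = j")
  case True
  then show ?thesis by (cases "j = k") (simp_all add: h_def f_idem f_h)
next
  case False
  then show ?thesis
  proof (cases "j = k")
    case True
    then show ?thesis using \<open>i \<noteq> j\<close> by (simp add: h_def h_f)
  next
    case False
    then show ?thesis using \<open>i \<noteq> j\<close> R2a[of i j k] f_eq[of j i]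
      by (cases "i = k") (simp_all add: h_def)
  qed
qed

lemma UR3: "g j i ** g k j = g k i"
proof (cases "j = i")
  case True
  then show ?thesis
  proof (cases "k = j")
    case True
    then show ?thesis using \<open>j = i\<close>
      by (simp add: g_def mm_diff_l mm_diff_r ee_f f_idem)
  next
    case False
    then show ?thesis using \<open>j = i\<close> by (simp add: g_def mm_diff_l f_g g0_corner)
  qed
next
  case False
  then show ?thesis
  proof (cases "k = j")
    case True
    then show ?thesis using \<open>j \<noteq> i\<close> by (simp add: g_def mm_diff_r g_f g0_corner)
  next
    case False
    show ?thesis
    proof (cases "k = i")
      case True
      have "ee i = f i + g0 j i ** g0 i j" using ee_dec[of i j] f_eq[of j i] \<open>j \<noteq> i\<close> by simp
      then have "g0 j i ** g0 i j = ee i - f i" by (simp add: algebra_simps)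
      then show ?thesis using True \<open>j \<noteq> i\<close> by (simp add: g_def)
    next
      case False
      then show ?thesis using \<open>j \<noteq> i\<close> \<open>k \<noteq> j\<close> R3a[of i j k] by (simp add: g_def)
    qed
  qed
qed

end


context jh2 begin

lemma Tcorner: "ee i ** \<phi> (E p q c) ** ee j =
   (if p = i \<and> q = j then D i c ** h i j else 0) + (if p = j \<and> q = i then D i c ** g j i else 0)"
proof (cases "p = i \<and> q = j")
  case True
  show ?thesis
  proof (cases "i = j")
    case True
    have "D i c ** h i i + D i c ** g i i = D i c ** ee i"
      by (simp add: h_def g_def flip: matrix_add_ldistrib)
    then show ?thesis using True \<open>p = i \<and> q = j\<close> by (simp add: D_def[symmetric])
  next
    case False
    then show ?thesis using \<open>p = i \<and> q = j\<close> CH1[of i j c] by (simp add: HH_def[symmetric] h_def)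
  qed
next
  case False
  show ?thesis
  proof (cases "p = j \<and> q = i")
    case True
    then have "i \<noteq> j" using False by auto
    then show ?thesis using True False CG1[of j i c] by (simp add: GG_def[symmetric] g_def)
  next
    case False2: False
    have "ee i ** \<phi> (E p q c) ** ee j = 0"
    proof (cases "i \<noteq> p \<and> i \<noteq> q")
      case True
      then show ?thesis by (simp add: V1)
    next
      case F3: False
      show ?thesis
      proof (cases "j \<noteq> p \<and> j \<noteq> q")
        case True
        then show ?thesis by simp
      next
        case False
        then have ij: "i = j" "p \<noteq> q" using F3 False2 \<open>\<not> (p = i \<and> q = j)\<close> by auto
        show ?thesis
        proof (cases "i = p")
          case True
          then show ?thesis using ij by (simp add: PA)
        next
          case False
          then have "i = q" using F3 by auto
          then show ?thesis using ij by (simp add: PC)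
        qed
      qed
    qed
    then show ?thesis using False False2 by (simp only: if_not_P if_False add_0)
  qed
qed

lemma U0: "ee i ** \<phi> A ** ee j = D i (A$i$j) ** h i j + D i (A$j$i) ** g j i"
proof -
  have "ee i ** \<phi> A ** ee j = ee i ** (\<Sum>p\<in>UNIV. \<Sum>q\<in>UNIV. \<phi> (E p q (A$p$q))) ** ee j"
    by (subst mat_decomp[of A]) (simp only: sum)
  also have "\<dots> = (\<Sum>p\<in>UNIV. \<Sum>q\<in>UNIV. ee i ** \<phi> (E p q (A$p$q)) ** ee j)"
    by (simp add: mm_sum_l mm_sum_r)
  also have "\<dots> = (\<Sum>p\<in>UNIV. \<Sum>q\<in>UNIV. (if p = i \<and> q = j then D i (A$p$q) ** h i j else 0))
       + (\<Sum>p\<in>UNIV. \<Sum>q\<in>UNIV. (if p = j \<and> q = i then D i (A$p$q) ** g j i else 0))"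
    unfolding Tcorner by (simp add: sum.distrib)
  also have "\<dots> = D i (A$i$j) ** h i j + D i (A$j$i) ** g j i"
    by (simp only: sum2_delta[where F = "\<lambda>p q. D i (A$p$q) ** h i j"]
                   sum2_delta[where F = "\<lambda>p q. D i (A$p$q) ** g j i"])
  finally show ?thesis .
qed

lemma UC_h'[simp]: "h i j ** (D j c ** X) = D i c ** (h i j ** X)"
  by (simp add: matrix_mul_assoc UC_h)
lemma UC_g'[simp]: "g j i ** (D j c ** X) = D i c ** (g j i ** X)"
  by (simp add: matrix_mul_assoc UC_g)
lemma UM'[simp]: "D i a ** (D i b ** X) = D i (a*b) ** X"
  by (simp add: matrix_mul_assoc UM)
lemma UR1a'[simp]: "h i j ** (g k j ** X) = 0"
  by (simp add: matrix_mul_assoc UR1a)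
lemma UR1b'[simp]: "g j i ** (h j k ** X) = 0"
  by (simp add: matrix_mul_assoc UR1b)
lemma UR2'[simp]: "h i j ** (h j k ** X) = h i k ** X"
  by (simp add: matrix_mul_assoc UR2)
lemma UR3'[simp]: "g j i ** (g k j ** X) = g k i ** X"
  by (simp add: matrix_mul_assoc UR3)

lemma prodterm: "(D i a ** h i j + D i a' ** g j i) ** (D j b ** h j k + D j b' ** g k j)
     = D i (a*b) ** h i k + D i (a'*b') ** g k i"
  by (simp add: matrix_add_ldistrib mm_rdistrib UC_h UC_g UR1a UR1b UR2 UR3 flip: matrix_mul_assoc)

end


context jh begin

lemma unit: "\<phi> (mat 1) ** \<phi> X = \<phi> X" "\<phi> X ** \<phi> (mat 1) = \<phi> X"
proof -
  have t: "\<phi> X = \<phi> (mat 1) ** \<phi> X ** \<phi> (mat 1)" using triple[of "mat 1" X] by simp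
  have e: "\<phi> (mat 1) ** \<phi> (mat 1) = \<phi> (mat 1)" by (rule idem) simp
  have "\<phi> (mat 1) ** \<phi> X = (\<phi> (mat 1) ** \<phi> (mat 1)) ** \<phi> X ** \<phi> (mat 1)"
    by (subst t) (simp only: matrix_mul_assoc)
  then show "\<phi> (mat 1) ** \<phi> X = \<phi> X" using t e by simp
  have "\<phi> X ** \<phi> (mat 1) = \<phi> (mat 1) ** \<phi> X ** (\<phi> (mat 1) ** \<phi> (mat 1))"
    by (subst t) (simp only: matrix_mul_assoc)
  then show "\<phi> X ** \<phi> (mat 1) = \<phi> X" using t e by simp
qed

lemma e_sum: "\<phi> (mat 1) = (\<Sum>i\<in>UNIV. ee i)"
  by (simp only: mat1_sum sum ee_def)

end

lemma mm_comp: "((A::'a::semiring_1^'n^'m) ** B)$i$k = (\<Sum>j\<in>UNIV. A$i$j * B$j$k)"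
  by (simp add: matrix_matrix_mult_def)

context jh2 begin

lemma corner_prod:
  "ee i ** (\<phi> A ** \<phi> B) ** ee k = D i ((A ** B)$i$k) ** h i k + D i ((B ** A)$k$i) ** g k i"
proof -
  have "ee i ** (\<phi> A ** \<phi> B) ** ee k = ee i ** \<phi> A ** (\<phi> (mat 1) ** \<phi> B) ** ee k"
    by (simp add: unit matrix_mul_assoc)
  also have "\<dots> = (\<Sum>j\<in>UNIV. ee i ** \<phi> A ** ee j ** \<phi> B ** ee k)"
    unfolding e_sum by (simp add: mm_sum_l mm_sum_r matrix_mul_assoc del: ee_idem)
  also have "\<dots> = (\<Sum>j\<in>UNIV. (ee i ** \<phi> A ** ee j) ** (ee j ** \<phi> B ** ee k))"
    by (rule sum.cong) (simp_all add: matrix_mul_assoc)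
  also have "\<dots> = (\<Sum>j\<in>UNIV. D i (A$i$j * B$j$k) ** h i k + D i (B$k$j * A$j$i) ** g k i)"
    unfolding U0 prodterm by (simp add: mult.commute)
  also have "\<dots> = D i ((A ** B)$i$k) ** h i k + D i ((B ** A)$k$i) ** g k i"
    by (simp only: sum.distrib mm_sum_l[symmetric] D_sum[symmetric] mm_comp)
  finally show ?thesis .
qed

lemma main2:
  assumes "A ** B = 0" "B ** A = 0"
  shows "\<phi> A ** \<phi> B = 0"
proof -
  have c: "\<And>i k. ee i ** (\<phi> A ** \<phi> B) ** ee k = 0"
    unfolding corner_prod using assms by simp
  have "\<phi> (mat 1) ** (\<phi> A ** \<phi> B) ** \<phi> (mat 1) = (\<phi> (mat 1) ** \<phi> A) ** (\<phi> B ** \<phi> (mat 1))"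
    by (simp only: matrix_mul_assoc)
  then have "\<phi> A ** \<phi> B = \<phi> (mat 1) ** (\<phi> A ** \<phi> B) ** \<phi> (mat 1)"
    by (simp only: unit)
  also have "\<dots> = (\<Sum>k\<in>UNIV. \<Sum>i\<in>UNIV. ee i ** (\<phi> A ** \<phi> B) ** ee k)"
    unfolding e_sum by (simp add: mm_sum_l mm_sum_r)
  also have "\<dots> = 0" by (simp add: c)
  finally show ?thesis .
qed

end

lemma part1:
  fixes \<Phi> :: "'a::field^'n::finite^'n \<Rightarrow> 'a^'r::finite^'r"
  assumes two: "(2::'a) \<noteq> 0" and jh: "jordan_hom \<Phi>" and AB: "A ** B = 0" "B ** A = 0"
  shows "\<Phi> A ** \<Phi> B = 0 \<and> \<Phi> B ** \<Phi> A = 0"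
proof -
  interpret jh \<Phi>
    using two jh unfolding jordan_hom_def additive_map_def by unfold_locales auto
  show ?thesis
  proof (cases "\<exists>a b::'n. a \<noteq> b")
    case True
    interpret jh2 \<Phi> by unfold_locales (rule True)
    show ?thesis using main2[OF AB] main2[OF AB(2) AB(1)] by simp
  next
    case False
    then have one: "\<And>a b::'n. a = b" by blast
    obtain i :: 'n where True by blast
    have u: "(UNIV::'n set) = {i}" using one by auto
    have "(A ** B)$i$i = A$i$i * B$i$i"
      unfolding mm_comp u by simp
    then have "A$i$i = 0 \<or> B$i$i = 0" using AB by simp
    moreover have z: "\<And>M::'a^'n^'n. M$i$i = 0 \<Longrightarrow> M = 0"
    proof -
      fix M :: "'a^'n^'n" assume "M$i$i = 0"
      then have "\<forall>a b. M$a$b = 0" using one by metis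
      then show "M = 0" by (simp add: vec_eq_iff)
    qed
    ultimately have "A = 0 \<or> B = 0" by blast
    then show ?thesis by auto
  qed
qed



lemma transpose_zero: "transpose (0::'a::zero^'n^'m) = 0"
  by (simp add: transpose_def vec_eq_iff)

lemma sym_comm:
  fixes A B :: "'a::comm_semiring_1^'n::finite^'n"
  assumes "symmetric_mat A" "symmetric_mat B" "A ** B = 0" shows "B ** A = 0"
proof -
  have "B ** A = transpose (A ** B)"
    using assms(1,2) by (simp add: matrix_transpose_mul symmetric_mat_def)
  then show ?thesis using assms(3) by (simp add: transpose_zero)
qed

lemma sa_entry: "self_adjoint A \<Longrightarrow> A$i$j = cnj (A$j$i)"
  unfolding self_adjoint_def conj_transpose_def by (metis vec_lambda_beta)

lemma sa_comm:
  fixes A B :: "complex^'n::finite^'n"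
  assumes "self_adjoint A" "self_adjoint B" "A ** B = 0" shows "B ** A = 0"
proof -
  have "\<And>i j. (B ** A)$i$j = cnj ((A ** B)$j$i)"
  proof -
    fix i j
    have "(B ** A)$i$j = (\<Sum>k\<in>UNIV. cnj (B$k$i) * cnj (A$j$k))"
      unfolding mm_comp using sa_entry[OF assms(1)] sa_entry[OF assms(2)] by metis
    also have "\<dots> = cnj ((A ** B)$j$i)" unfolding mm_comp by (simp add: mult.commute)
    finally show "(B ** A)$i$j = cnj ((A ** B)$j$i)" .
  qed
  then show ?thesis using assms(3) by (simp add: vec_eq_iff)
qed

theorem lemma4p1:
  shows "(\<forall>(\<Phi> :: 'a::field^'n::finite^'n \<Rightarrow> 'a^'r::finite^'r).
            (2::'a) \<noteq> 0 \<longrightarrow> jordan_hom \<Phi> \<longrightarrow>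
            (\<forall>A B. A ** B = 0 \<and> B ** A = 0 \<longrightarrow>
                   \<Phi> A ** \<Phi> B = 0 \<and> \<Phi> B ** \<Phi> A = 0))
       \<and> (\<forall>(\<Phi> :: real^'n^'n \<Rightarrow> real^'r^'r). jordan_hom \<Phi> \<longrightarrow>
            (\<forall>A B. A ** B = 0 \<and> B ** A = 0 \<longrightarrow>
                   \<Phi> A ** \<Phi> B = 0 \<and> \<Phi> B ** \<Phi> A = 0)
            \<and> (\<forall>A B. symmetric_mat A \<and> symmetric_mat B \<and> A ** B = 0 \<longrightarrow> \<Phi> A ** \<Phi> B = 0))
       \<and> (\<forall>(\<Phi> :: complex^'n^'n \<Rightarrow> complex^'r^'r). jordan_hom \<Phi> \<longrightarrow>
            (\<forall>A B. A ** B = 0 \<and> B ** A = 0 \<longrightarrow>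
                   \<Phi> A ** \<Phi> B = 0 \<and> \<Phi> B ** \<Phi> A = 0)
            \<and> (\<forall>A B. self_adjoint A \<and> self_adjoint B \<and> A ** B = 0 \<longrightarrow> \<Phi> A ** \<Phi> B = 0)
            \<and> (\<forall>A B. symmetric_mat A \<and> symmetric_mat B \<and> A ** B = 0 \<longrightarrow> \<Phi> A ** \<Phi> B = 0))"
proof (intro conjI allI impI)
  fix \<Phi> :: "'a::field^'n::finite^'n \<Rightarrow> 'a^'r::finite^'r" and A B :: "'a^'n^'n"
  assume "(2::'a) \<noteq> 0" "jordan_hom \<Phi>" "A ** B = 0 \<and> B ** A = 0"
  then show "\<Phi> A ** \<Phi> B = 0" "\<Phi> B ** \<Phi> A = 0" using part1 by blast+
next
  fix \<Phi> :: "real^'n^'n \<Rightarrow> real^'r^'r" and A B :: "real^'n^'n"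
  assume "jordan_hom \<Phi>" "A ** B = 0 \<and> B ** A = 0"
  then show "\<Phi> A ** \<Phi> B = 0" "\<Phi> B ** \<Phi> A = 0" using part1[of \<Phi> A B] by simp_all
next
  fix \<Phi> :: "real^'n^'n \<Rightarrow> real^'r^'r" and A B :: "real^'n^'n"
  assume "jordan_hom \<Phi>" "symmetric_mat A \<and> symmetric_mat B \<and> A ** B = 0"
  then show "\<Phi> A ** \<Phi> B = 0" using part1[of \<Phi> A B] sym_comm[of A B] by simp
next
  fix \<Phi> :: "complex^'n^'n \<Rightarrow> complex^'r^'r" and A B :: "complex^'n^'n"
  assume "jordan_hom \<Phi>" "A ** B = 0 \<and> B ** A = 0"
  then show "\<Phi> A ** \<Phi> B = 0" "\<Phi> B ** \<Phi> A = 0" using part1[of \<Phi> A B] by simp_all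
next
  fix \<Phi> :: "complex^'n^'n \<Rightarrow> complex^'r^'r" and A B :: "complex^'n^'n"
  assume "jordan_hom \<Phi>" "self_adjoint A \<and> self_adjoint B \<and> A ** B = 0"
  then show "\<Phi> A ** \<Phi> B = 0" using part1[of \<Phi> A B] sa_comm[of A B] by simp
next
  fix \<Phi> :: "complex^'n^'n \<Rightarrow> complex^'r^'r" and A B :: "complex^'n^'n"
  assume "jordan_hom \<Phi>" "symmetric_mat A \<and> symmetric_mat B \<and> A ** B = 0"
  then show "\<Phi> A ** \<Phi> B = 0" using part1[of \<Phi> A B] sym_comm[of A B] by simp
qed



end
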